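(* Let $0<\alpha<d$, $\mathcal{B}_\alpha\in\{\mathcal{B}^c_\alpha,\mathcal{B}^u_\alpha\}$ and $f\in L^1_{\mathrm{loc}}(\mathbb{R}^d)$. Then for each $B\in\mathcal{B}_\alpha$ we have $f_{Q_B}\sim f_B$ and $\ell(Q_B)\sim r(B)$, i.e. $C^{-1}f_B\le f_{Q_B}\le Cf_B$ and $C^{-1}r(B)\le \ell(Q_B)\le C r(B)$ with a constant $C$ depending only on $d$.
   Context: $f_B=\frac1{|B|}\int_B|f|$ for a ball or cube $B$; $r(B)$ is the radius of a ball, $\ell(Q)$ the sidelength of a cube, $\overline B$ the closure. Fix $3^d$ (translated) dyadic grids $\mathcal{D}_1,\dots,\mathcal{D}_{3^d}$ such that every ball $B$ is contained in some cube of $\mathcal{D}=\mathcal{D}_1\cup\dots\cup\mathcal{D}_{3^d}$ of sidelength at most $C_d\,r(B)$; for each ball $B$ let $Q_B$ be such a cube. $\mathrm{M}^c_\alpha f(x)=\sup_{r>0}r^\alpha f_{B(x,r)}$, $\mathrm{M}^u_\alpha f(x)=\sup_{B\ni x}r(B)^\alpha f_B$. $\mathcal{B}^c_\alpha(x)=\{B(x,r)\}$ with $r$ the largest radius with $\mathrm{M}^c_\alpha f(x)=r^\alpha f_{B(x,r)}$; $\mathcal{B}^u_\alpha(x)$ is the set of balls $B$ with $x\in\overline B$, $r(B)^\alpha f_B=\mathrm{M}^u_\alpha f(x)$ and $r(A)^\alpha f_A<\mathrm{M}^u_\alpha f(x)$ for all balls $A\supsetneq B$. $\mathcal{B}^c_\alpha=\bigcup_x\mathcal{B}^c_\alpha(x)$,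 $\mathcal{B}^u_\alpha=\bigcup_x\mathcal{B}^u_\alpha(x)$. *)

theory Defs
  imports "HOL-Analysis.Analysis"
begin

text \<open>Cubes are represented by pairs (lower corner,
  sidelength); the cube itself is the half-open cube.\<close>

definition cube_set :: "('a::euclidean_space \<times> real) \<Rightarrow> 'a set" where
  "cube_set Q = {x. \<forall>i\<in>Basis. fst Q \<bullet> i \<le> x \<bullet> i \<and> x \<bullet> i < fst Q \<bullet> i + snd Q}"

definition ball_set :: "('a::euclidean_space \<times> real) \<Rightarrow> 'a set" where
  "ball_set B = ball (fst B) (snd B)"

definition is_ball :: "('a::euclidean_space \<times> real) \<Rightarrow> bool" where
  "is_ball B \<longleftrightarrow> snd B > 0"

definition dyadic_grid :: "('a::euclidean_space \<times> real) set \<Rightarrow> bool" where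
  "dyadic_grid G \<longleftrightarrow>
     (\<forall>Q\<in>G. \<exists>k::int. snd Q = 2 powr (real_of_int k)) \<and>
     (\<forall>k::int. \<forall>x. \<exists>!Q. Q \<in> G \<and> snd Q = 2 powr (real_of_int k) \<and> x \<in> cube_set Q) \<and>
     (\<forall>Q\<in>G. \<forall>R\<in>G. cube_set Q \<inter> cube_set R = {} \<or> cube_set Q \<subseteq> cube_set R \<or> cube_set R \<subseteq> cube_set Q)"

definition locally_integrable :: "('a::euclidean_space \<Rightarrow> real) \<Rightarrow> bool" where
  "locally_integrable f \<longleftrightarrow> (\<forall>K. compact K \<longrightarrow> set_integrable lebesgue K f)"

definition avg :: "('a::euclidean_space \<Rightarrow> real) \<Rightarrow> 'a set \<Rightarrow> real" where
  "avg f S = (LINT y:S|lebesgue. \<bar>f y\<bar>) / measure lebesgue S"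

definition Mc :: "real \<Rightarrow> ('a::euclidean_space \<Rightarrow> real) \<Rightarrow> 'a \<Rightarrow> ereal" where
  "Mc \<alpha> f x = (SUP r\<in>{0<..}. ereal (r powr \<alpha> * avg f (ball x r)))"

definition Mu :: "real \<Rightarrow> ('a::euclidean_space \<Rightarrow> real) \<Rightarrow> 'a \<Rightarrow> ereal" where
  "Mu \<alpha> f x = (SUP B\<in>{B. is_ball B \<and> x \<in> ball_set B}. ereal (snd B powr \<alpha> * avg f (ball_set B)))"

definition Bc_at :: "real \<Rightarrow> ('a::euclidean_space \<Rightarrow> real) \<Rightarrow> 'a \<Rightarrow> ('a \<times> real) set" where
  "Bc_at \<alpha> f x = {(x, r) | r. r > 0 \<and> Mc \<alpha> f x = ereal (r powr \<alpha> * avg f (ball x r)) \<and>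
       (\<forall>s>0. Mc \<alpha> f x = ereal (s powr \<alpha> * avg f (ball x s)) \<longrightarrow> s \<le> r)}"

definition Bu_at :: "real \<Rightarrow> ('a::euclidean_space \<Rightarrow> real) \<Rightarrow> 'a \<Rightarrow> ('a \<times> real) set" where
  "Bu_at \<alpha> f x = {B. is_ball B \<and> x \<in> closure (ball_set B) \<and>
       Mu \<alpha> f x = ereal (snd B powr \<alpha> * avg f (ball_set B)) \<and>
       (\<forall>A. is_ball A \<and> ball_set B \<subset> ball_set A \<longrightarrow>
            ereal (snd A powr \<alpha> * avg f (ball_set A)) < Mu \<alpha> f x)}"

definition Bc :: "real \<Rightarrow> ('a::euclidean_space \<Rightarrow> real) \<Rightarrow> ('a \<times> real) set" where
  "Bc \<alpha> f = (\<Union>x. Bc_at \<alpha> f x)"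

definition Bu :: "real \<Rightarrow> ('a::euclidean_space \<Rightarrow> real) \<Rightarrow> ('a \<times> real) set" where
  "Bu \<alpha> f = (\<Union>x. Bu_at \<alpha> f x)"

end

theory Submission imports Defs begin

lemma meas_ball: "r \<ge> 0 \<Longrightarrow> measure lebesgue (ball (c::'a::euclidean_space) r) = r ^ DIM('a) * measure lborel (ball (0::'a) 1)"
  using content_ball_conv_unit_ball[of r c] by simp

lemma unit_pos: "measure lborel (ball (0::'a::euclidean_space) 1) > 0"
  using content_ball_pos[of 1 "0::'a"] by simp

lemma cube_box1: "box a (a + l *\<^sub>R One) \<subseteq> cube_set (a, l)"
  unfolding cube_set_def by (auto simp: mem_box inner_add_left less_imp_le)

lemma cube_box2: "cube_set (a,l) \<subseteq> cbox a (a + l *\<^sub>R One)"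
proof
  fix x assume "x \<in> cube_set (a,l)"
  then show "x \<in> cbox a (a + l *\<^sub>R One)" unfolding cube_set_def 
    by (auto simp: mem_box inner_add_left dest!: bspec intro: less_imp_le)
qed

lemma cube_cvx: "convex (cube_set (a, l))"
proof -
  have "cube_set (a,l) = (\<Inter>i\<in>Basis. {x. inner i x \<ge> a \<bullet> i} \<inter> {x. inner i x < a \<bullet> i + l})"
    unfolding cube_set_def by (auto simp: inner_commute)
  then show ?thesis by (auto intro!: convex_INT convex_Int convex_halfspace_ge convex_halfspace_lt)
qed

lemma cube_meas: assumes "l > 0" shows "cube_set (a::'a::euclidean_space, l) \<in> lmeasurable"
  "measure lebesgue (cube_set (a, l)) = l ^ DIM('a)"
proof -
  have bd: "bounded (cube_set (a,l))" using cube_box2 bounded_cbox bounded_subset by blast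
  show m: "cube_set (a, l) \<in> lmeasurable" using measurable_convex[OF cube_cvx bd] .
  have e: "(\<Prod>b\<in>(Basis::'a set). ((a + l *\<^sub>R One) - a) \<bullet> b) = l ^ DIM('a)"
    by (simp add: prod_constant)
  have "measure lebesgue (box a (a + l *\<^sub>R One)) \<le> measure lebesgue (cube_set (a, l))"
    by (rule measure_mono_fmeasurable[OF cube_box1]) (auto simp: m fmeasurableD)
  moreover have "measure lebesgue (cube_set (a, l)) \<le> measure lebesgue (cbox a (a + l *\<^sub>R One))"
    by (rule measure_mono_fmeasurable[OF cube_box2]) (auto simp: m fmeasurableD)
  moreover have "measure lborel (box a (a + l *\<^sub>R One)) = l ^ DIM('a)"
    using assms by (subst measure_lborel_box) (auto simp: inner_add_left e)
  moreover have "measure lborel (cbox a (a + l *\<^sub>R One)) = l ^ DIM('a)"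
    using assms by (subst measure_lborel_cbox) (auto simp: inner_add_left e)
  ultimately show "measure lebesgue (cube_set (a, l)) = l ^ DIM('a)" by simp
qed

lemma two_r: assumes "ball c r \<subseteq> cube_set (a,l)" "r > 0" shows "2*r \<le> l"
proof (rule ccontr)
  assume "\<not> 2*r \<le> l"
  obtain i where i: "i \<in> (Basis::'a set)" using nonempty_Basis by blast
  have "c \<in> cube_set (a,l)" using assms by auto
  then have lp: "l > 0" using i unfolding cube_set_def by fastforce
  define t where "t = (l/2 + r)/2"
  have t: "0 < t" "t < r" "l < 2*t" using lp \<open>\<not> 2*r \<le> l\<close> by (auto simp: t_def)
  have "c - t *\<^sub>R i \<in> ball c r" "c + t *\<^sub>R i \<in> ball c r" using t i by (auto simp: dist_norm)
  then have "c - t *\<^sub>R i \<in> cube_set (a,l)" "c + t *\<^sub>R i \<in> cube_set (a,l)" using assms by auto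
  then have "a \<bullet> i \<le> c \<bullet> i - t" "c \<bullet> i + t < a \<bullet> i + l" using i unfolding cube_set_def
    by (auto simp: inner_diff_left inner_add_left dest!: bspec)
  then show False using t by linarith
qed

lemma cube_ball: assumes "x \<in> closure (cube_set (a,l))" "l > 0"
  shows "cube_set (a::'a::euclidean_space,l) \<subseteq> ball x (2 * real DIM('a) * l)"
proof
  fix y assume y: "y \<in> cube_set (a,l)"
  have "closure (cube_set (a,l)) \<subseteq> cbox a (a + l *\<^sub>R One)"
    using cube_box2 closed_cbox closure_minimal by blast
  then have xc: "x \<in> cbox a (a + l *\<^sub>R One)" using assms by auto
  have yc: "y \<in> cbox a (a + l *\<^sub>R One)" using y cube_box2 by blast
  have "\<bar>(x - y) \<bullet> i\<bar> \<le> l" if i: "i \<in> Basis" for i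
    using xc yc i by (auto simp: mem_box inner_diff_left inner_add_left dest!: bspec)
  then have "(\<Sum>i\<in>Basis. \<bar>(x - y) \<bullet> i\<bar>) \<le> (\<Sum>i\<in>(Basis::'a set). l)" by (intro sum_mono) auto
  also have "\<dots> = real DIM('a) * l" by simp
  finally have "norm (x - y) \<le> real DIM('a) * l" using norm_le_l1[of "x-y"] by linarith
  moreover have "real DIM('a) * l < 2 * real DIM('a) * l" using assms(2) by (simp add: DIM_positive)
  ultimately show "y \<in> ball x (2 * real DIM('a) * l)" unfolding mem_ball dist_norm by linarith
qed

lemma int_mono_set: fixes f :: "'a::euclidean_space \<Rightarrow> real" assumes "set_integrable lebesgue T f" "S \<in> sets lebesgue" "S \<subseteq> T"
  shows "(LINT y:S|lebesgue. \<bar>f y\<bar>) \<le> (LINT y:T|lebesgue. \<bar>f y\<bar>)"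
proof -
  have iT: "set_integrable lebesgue T (\<lambda>y. \<bar>f y\<bar>)" using set_integrable_abs[OF assms(1)] .
  have iS: "set_integrable lebesgue S (\<lambda>y. \<bar>f y\<bar>)" using set_integrable_subset[OF iT assms(2,3)] .
  show ?thesis using iT iS assms(3) unfolding set_integrable_def set_lebesgue_integral_def
    by (intro integral_mono) (auto split: split_indicator)
qed

lemma Jnn: "0 \<le> (LINT y:S|lebesgue. \<bar>(f::'a::euclidean_space \<Rightarrow> real) y\<bar>)"
  unfolding set_lebesgue_integral_def by (rule Bochner_Integration.integral_nonneg) auto

lemma key:
  fixes f :: "'a::euclidean_space \<Rightarrow> real"
  assumes li: "locally_integrable f" and rp: "r > 0" and sub: "ball c r \<subseteq> cube_set (a,l)"
    and lC: "l \<le> Cd * r" and xcl: "x \<in> closure (ball c r)" and ap: "\<alpha> > 0"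
    and ineq: "(2 * real DIM('a) * l) powr \<alpha> * avg f (ball x (2 * real DIM('a) * l))
               \<le> r powr \<alpha> * avg f (ball c r)"
  shows "avg f (ball c r) * (measure lborel (ball (0::'a) 1) / Cd ^ DIM('a)) \<le> avg f (cube_set (a,l))"
    "avg f (cube_set (a,l)) \<le> measure lborel (ball (0::'a) 1) * (2 * real DIM('a)) ^ DIM('a) * avg f (ball c r)"
proof -
  define d where "d = real DIM('a)"
  define \<omega> where "\<omega> = measure lborel (ball (0::'a) 1)"
  define R where "R = 2 * d * l"
  define JB where "JB = (LINT y:ball c r|lebesgue. \<bar>f y\<bar>)"
  define JQ where "JQ = (LINT y:cube_set (a,l)|lebesgue. \<bar>f y\<bar>)"
  define JA where "JA = (LINT y:ball x R|lebesgue. \<bar>f y\<bar>)"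
  have om: "\<omega> > 0" unfolding \<omega>_def by (rule unit_pos)
  have d1: "d \<ge> 1" unfolding d_def using DIM_positive by (simp add: Suc_le_eq)
  have l2r: "2 * r \<le> l" using two_r[OF sub rp] .
  have lp: "l > 0" using l2r rp by linarith
  have Rp: "R > 0" unfolding R_def using d1 lp by simp
  have rR: "r \<le> R" unfolding R_def using d1 lp l2r rp
    by (metis add_increasing2 le_add_same_cancel1 less_imp_le mult.assoc mult_2 mult_le_cancel_right1 mult_nonneg_nonneg order.trans zero_le_one)
  have Cdp: "Cd > 0" proof (rule ccontr)
    assume "\<not> Cd > 0" then have "Cd * r \<le> 0" using rp by (simp add: mult_nonpos_nonneg)
    then show False using lC lp by linarith
  qed
  have xQ: "x \<in> closure (cube_set (a,l))" using closure_mono[OF sub] xcl by blast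
  have QA: "cube_set (a,l) \<subseteq> ball x R" unfolding R_def d_def using cube_ball[OF xQ lp] .
  have iK: "set_integrable lebesgue (cball x R) f" using li compact_cball unfolding locally_integrable_def by blast
  have Qm: "cube_set (a,l) \<in> sets lebesgue" using cube_meas(1)[OF lp] fmeasurableD by blast
  have JBQ: "JB \<le> JQ" unfolding JB_def JQ_def
    by (rule int_mono_set[OF set_integrable_subset[OF iK Qm]]) (use QA sub in auto)
  have JQA: "JQ \<le> JA" unfolding JA_def JQ_def
    by (rule int_mono_set[OF set_integrable_subset[OF iK]]) (use QA Qm in auto)
  have JBn: "JB \<ge> 0" unfolding JB_def by (rule Jnn)
  have avB: "avg f (ball c r) = JB / (r ^ DIM('a) * \<omega>)"
    unfolding avg_def JB_def \<omega>_def using meas_ball[of r c] rp by simp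
  have avA: "avg f (ball x R) = JA / (R ^ DIM('a) * \<omega>)"
    unfolding avg_def JA_def \<omega>_def using meas_ball[of R x] Rp by simp
  have avQ: "avg f (cube_set (a,l)) = JQ / l ^ DIM('a)"
    unfolding avg_def JQ_def using cube_meas(2)[OF lp, of a] by simp
  have avBn: "avg f (ball c r) \<ge> 0" using avB JBn om rp by simp
  show "avg f (ball c r) * (measure lborel (ball (0::'a) 1) / Cd ^ DIM('a)) \<le> avg f (cube_set (a,l))"
  proof -
    have "avg f (ball c r) * (\<omega> / Cd ^ DIM('a)) = JB / (Cd * r) ^ DIM('a)"
      unfolding avB using om rp Cdp by (simp add: power_mult_distrib field_simps)
    also have "\<dots> \<le> JB / l ^ DIM('a)"
      by (rule divide_left_mono[OF power_mono[OF lC]]) (use JBn lp Cdp rp in auto)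
    also have "\<dots> \<le> JQ / l ^ DIM('a)" using JBQ lp by (simp add: divide_right_mono)
    finally show ?thesis unfolding avQ \<omega>_def .
  qed
  show "avg f (cube_set (a,l)) \<le> measure lborel (ball (0::'a) 1) * (2 * real DIM('a)) ^ DIM('a) * avg f (ball c r)"
  proof -
    have "R powr \<alpha> * avg f (ball x R) \<le> r powr \<alpha> * avg f (ball c r)" using ineq unfolding R_def d_def .
    also have "\<dots> \<le> R powr \<alpha> * avg f (ball c r)"
      by (rule mult_right_mono[OF powr_mono2]) (use rR rp ap avBn in auto)
    finally have AB: "avg f (ball x R) \<le> avg f (ball c r)" using Rp by simp
    have "avg f (cube_set (a,l)) \<le> JA / l ^ DIM('a)" unfolding avQ using JQA lp by (simp add: divide_right_mono)
    also have "\<dots> = \<omega> * (2 * d) ^ DIM('a) * avg f (ball x R)"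
      unfolding avA using om lp d1 by (simp add: R_def power_mult_distrib field_simps)
    also have "\<dots> \<le> \<omega> * (2 * d) ^ DIM('a) * avg f (ball c r)"
      by (rule mult_left_mono[OF AB]) (use om d1 in auto)
    finally show ?thesis unfolding \<omega>_def d_def .
  qed
qed


lemma get_ineq:
  fixes f :: "'a::euclidean_space \<Rightarrow> real"
  assumes "B \<in> Bc \<alpha> f \<or> B \<in> Bu \<alpha> f"
  shows "snd B > 0 \<and> (\<exists>x. x \<in> closure (ball_set B) \<and> (\<forall>R>0.
     R powr \<alpha> * avg f (ball x R) \<le> snd B powr \<alpha> * avg f (ball_set B)))"
  using assms(1)
proof
  assume "B \<in> Bc \<alpha> f"
  then obtain x r where B: "B = (x, r)" "r > 0" and M: "Mc \<alpha> f x = ereal (r powr \<alpha> * avg f (ball x r))"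
    unfolding Bc_def Bc_at_def by blast
  have "R powr \<alpha> * avg f (ball x R) \<le> r powr \<alpha> * avg f (ball x r)" if R: "R > 0" for R
  proof -
    have "ereal (R powr \<alpha> * avg f (ball x R)) \<le> Mc \<alpha> f x"
      unfolding Mc_def by (rule SUP_upper) (use R in auto)
    then show ?thesis using M by simp
  qed
  moreover have "x \<in> closure (ball x r)" using B(2) closure_subset by (metis centre_in_ball subsetD)
  ultimately show ?thesis unfolding B(1) ball_set_def using B(2) by (intro conjI exI[of _ x]) auto
next
  assume "B \<in> Bu \<alpha> f"
  then obtain x where B: "is_ball B" "x \<in> closure (ball_set B)" and M: "Mu \<alpha> f x = ereal (snd B powr \<alpha> * avg f (ball_set B))"
    unfolding Bu_def Bu_at_def by blast
  have "R powr \<alpha> * avg f (ball x R) \<le> snd B powr \<alpha> * avg f (ball_set B)" if R: "R > 0" for R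
  proof -
    have "ereal (snd (x,R) powr \<alpha> * avg f (ball_set (x,R))) \<le> Mu \<alpha> f x"
      unfolding Mu_def by (rule SUP_upper) (use R in \<open>auto simp: is_ball_def ball_set_def\<close>)
    then show ?thesis using M by (simp add: ball_set_def)
  qed
  then show ?thesis using B by (auto simp: is_ball_def)
qed

theorem lemma4p2:
  fixes T :: "nat \<Rightarrow> ('a::euclidean_space \<times> real) set" and Cd :: real
  assumes grids: "\<forall>i<3 ^ DIM('a). dyadic_grid (T i)"
    and cover: "\<forall>B. is_ball B \<longrightarrow>
       (\<exists>Q\<in>(\<Union>i<3 ^ DIM('a). T i). ball_set B \<subseteq> cube_set Q \<and> snd Q \<le> Cd * snd B)"
  shows "\<exists>C>0. \<forall>(\<alpha>::real) (f::'a \<Rightarrow> real) QB B.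
     0 < \<alpha> \<and> \<alpha> < real DIM('a) \<and> locally_integrable f \<and>
     (\<forall>A. is_ball A \<longrightarrow> QB A \<in> (\<Union>i<3 ^ DIM('a). T i) \<and>
          ball_set A \<subseteq> cube_set (QB A) \<and> snd (QB A) \<le> Cd * snd A) \<and>
     (B \<in> Bc \<alpha> f \<or> B \<in> Bu \<alpha> f)
     \<longrightarrow> inverse C * avg f (ball_set B) \<le> avg f (cube_set (QB B)) \<and>
         avg f (cube_set (QB B)) \<le> C * avg f (ball_set B) \<and>
         inverse C * snd B \<le> snd (QB B) \<and> snd (QB B) \<le> C * snd B"
proof -
  define \<omega> where "\<omega> = measure lborel (ball (0::'a) 1)"
  define d where "d = real DIM('a)"
  have om: "\<omega> > 0" unfolding \<omega>_def by (rule unit_pos)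
  have d1: "d \<ge> 1" unfolding d_def using DIM_positive by (simp add: Suc_le_eq)
  obtain Q0 where "ball_set ((0::'a), 1::real) \<subseteq> cube_set Q0" "snd Q0 \<le> Cd * 1"
    using cover[rule_format, of "(0::'a, 1::real)"] by (auto simp: is_ball_def)
  then have "ball 0 1 \<subseteq> cube_set (fst Q0, snd Q0)" "snd Q0 \<le> Cd" by (auto simp: ball_set_def)
  then have Cd2: "Cd \<ge> 2" using two_r[of "0::'a" 1 "fst Q0" "snd Q0"] by auto
  define C where "C = max (max Cd 1) (max (Cd ^ DIM('a) / \<omega>) (\<omega> * (2 * d) ^ DIM('a)))"
  have Cp: "C > 0" unfolding C_def by auto
  have C1: "C \<ge> 1" "C \<ge> Cd" "C \<ge> Cd ^ DIM('a) / \<omega>" "C \<ge> \<omega> * (2 * d) ^ DIM('a)"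
    unfolding C_def by auto
  have iC: "inverse C \<le> \<omega> / Cd ^ DIM('a)"
  proof -
    have p: "Cd ^ DIM('a) / \<omega> > 0" using Cd2 om by simp
    have "inverse C \<le> inverse (Cd ^ DIM('a) / \<omega>)" using le_imp_inverse_le[OF C1(3) p] .
    then show ?thesis by simp
  qed
  show ?thesis
  proof (rule exI[of _ C], intro conjI[OF Cp] allI impI)
    fix \<alpha> :: real and f :: "'a \<Rightarrow> real" and QB B
    assume H: "0 < \<alpha> \<and> \<alpha> < real DIM('a) \<and> locally_integrable f \<and>
     (\<forall>A. is_ball A \<longrightarrow> QB A \<in> (\<Union>i<3 ^ DIM('a). T i) \<and>
          ball_set A \<subseteq> cube_set (QB A) \<and> snd (QB A) \<le> Cd * snd A) \<and>
     (B \<in> Bc \<alpha> f \<or> B \<in> Bu \<alpha> f)"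
    obtain a l where QBB: "QB B = (a, l)" by (cases "QB B") auto
    obtain c r where BB: "B = (c, r)" by (cases B) auto
    have GI: "snd B > 0 \<and> (\<exists>x. x \<in> closure (ball_set B) \<and> (\<forall>R>0.
     R powr \<alpha> * avg f (ball x R) \<le> snd B powr \<alpha> * avg f (ball_set B)))"
      using get_ineq H by blast
    have Bb: "is_ball B" using GI by (simp add: is_ball_def)
    then have "ball_set B \<subseteq> cube_set (QB B)" using H by blast
    then have "ball c r \<subseteq> cube_set (a, l)" using QBB BB by (simp add: ball_set_def)
    then have lp: "l > 0" using two_r[of c r a l] GI BB by simp
    obtain x where x: "snd B > 0" "x \<in> closure (ball_set B)"
      "(2 * d * l) powr \<alpha> * avg f (ball x (2 * d * l)) \<le> snd B powr \<alpha> * avg f (ball_set B)"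
    proof -
      from GI obtain x where "x \<in> closure (ball_set B)" "\<forall>R>0.
         R powr \<alpha> * avg f (ball x R) \<le> snd B powr \<alpha> * avg f (ball_set B)" by blast
      moreover have "2 * d * l > 0" using d1 lp by simp
      ultimately show ?thesis using that GI by blast
    qed
    have "ball_set B \<subseteq> cube_set (QB B) \<and> snd (QB B) \<le> Cd * snd B" using H Bb by blast
    then have sub: "ball c r \<subseteq> cube_set (a, l)" and lC: "l \<le> Cd * r"
      using QBB BB by (simp_all add: ball_set_def)
    have rp: "r > 0" using x(1) BB by simp
    have xc: "x \<in> closure (ball c r)" using x(2) BB by (simp add: ball_set_def)
    have ineq: "(2 * real DIM('a) * l) powr \<alpha> * avg f (ball x (2 * real DIM('a) * l))
               \<le> r powr \<alpha> * avg f (ball c r)" using x(3) BB by (simp add: ball_set_def d_def)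
    have li: "locally_integrable f" and ap: "\<alpha> > 0" using H by auto
    note K = key[OF li rp sub lC xc ap ineq]
    have avBn: "avg f (ball c r) \<ge> 0" unfolding avg_def by (intro divide_nonneg_nonneg Jnn) auto
    have l2r: "2 * r \<le> l" using two_r[OF sub rp] .
    have "inverse C * avg f (ball c r) \<le> (\<omega> / Cd ^ DIM('a)) * avg f (ball c r)"
      by (rule mult_right_mono[OF iC avBn])
    then have G1: "inverse C * avg f (ball c r) \<le> avg f (cube_set (a, l))"
      using K(1) unfolding \<omega>_def by (simp add: mult.commute)
    have "\<omega> * (2 * d) ^ DIM('a) * avg f (ball c r) \<le> C * avg f (ball c r)"
      by (rule mult_right_mono[OF C1(4) avBn])
    then have G2: "avg f (cube_set (a, l)) \<le> C * avg f (ball c r)"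
      using K(2) unfolding \<omega>_def d_def by linarith
    have "inverse C \<le> 1" using C1(1) by (simp add: inverse_le_1_iff)
    then have "inverse C * r \<le> 1 * r" using rp by (intro mult_right_mono) auto
    then have G3: "inverse C * r \<le> l" using l2r rp by linarith
    have "Cd * r \<le> C * r" using C1(2) rp by (intro mult_right_mono) auto
    then have G4: "l \<le> C * r" using lC by linarith
    show "inverse C * avg f (ball_set B) \<le> avg f (cube_set (QB B)) \<and>
         avg f (cube_set (QB B)) \<le> C * avg f (ball_set B) \<and>
         inverse C * snd B \<le> snd (QB B) \<and> snd (QB B) \<le> C * snd B"
      using G1 G2 G3 G4 QBB BB by (simp add: ball_set_def)
  qed
qed
end
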